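(* Let $\mathcal M$ be the monoid obtained from the semigroup with zero $\langle a, e \mid ee = e,\ aaa = ae = 0,\ eaa = aa \rangle$ by adjoining an identity element $1$. Then $\mathcal M$ (a monoid of order six) is of type $2^{\aleph_0}$, i.e., the monoid variety generated by $\mathcal M$ has uncountably many subvarieties.
   Context: In the presentation, $0$ denotes the zero element of the presented semigroup; the resulting monoid has the six elements $1, a, e, aa, ea, 0$. Varieties are varieties of monoids (classes closed under homomorphic images, submonoids, and arbitrary direct products). A monoid is of type $2^{\aleph_0}$ if the variety it generates has uncountably many subvarieties. *)

theory Defs
  imports Main "HOL-Library.Countable_Set"
begin

text \<open>The six-element monoid M = S^1 where S = < a, e | ee = e, aaa = ae = 0, eaa = aa >
  (with zero 0). Elements: 1, a, e, aa, ea, 0.\<close>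

datatype M6 = One | A | E | AA | EA | Zero

fun mmul :: "M6 \<Rightarrow> M6 \<Rightarrow> M6" where
  "mmul One y = y"
| "mmul x One = x"
| "mmul Zero _ = Zero"
| "mmul _ Zero = Zero"
| "mmul A A = AA"
| "mmul A E = Zero"
| "mmul A AA = Zero"
| "mmul A EA = Zero"
| "mmul E A = EA"
| "mmul E E = E"
| "mmul E AA = AA"
| "mmul E EA = EA"
| "mmul AA _ = Zero"
| "mmul EA A = AA"
| "mmul EA _ = Zero"

definition eval_word :: "(nat \<Rightarrow> M6) \<Rightarrow> nat list \<Rightarrow> M6" where
  "eval_word \<phi> w = foldr (\<lambda>x r. mmul (\<phi> x) r) w One"

definition Id_M :: "(nat list \<times> nat list) set" where
  "Id_M = {(u, v). \<forall>\<phi>. eval_word \<phi> u = eval_word \<phi> v}"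

definition subst_word :: "(nat \<Rightarrow> nat list) \<Rightarrow> nat list \<Rightarrow> nat list" where
  "subst_word \<sigma> w = concat (map \<sigma> w)"

text \<open>By Birkhoff's theorem, subvarieties of the monoid variety var M correspond bijectively
  (order-reversingly) to equational theories containing Id_M.\<close>
definition equational_theory :: "(nat list \<times> nat list) set \<Rightarrow> bool" where
  "equational_theory R \<longleftrightarrow>
     equiv UNIV R \<and>
     (\<forall>u v w z. (u, v) \<in> R \<longrightarrow> (w @ u @ z, w @ v @ z) \<in> R) \<and>
     (\<forall>u v \<sigma>. (u, v) \<in> R \<longrightarrow> (subst_word \<sigma> u, subst_word \<sigma> v) \<in> R)"

definition subvariety_theories :: "(nat list \<times> nat list) set set" where
  "subvariety_theories = {R. equational_theory R \<and> Id_M \<subseteq> R}"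

end

theory Submission
  imports Defs "HOL-Library.Multiset"
begin

lemma mmul_One_right[simp]: "mmul x One = x" by (cases x) auto

lemma mmul_assoc: "mmul (mmul a b) c = mmul a (mmul b c)"
  by (cases a; cases b; cases c) simp_all

lemma eval_append: "eval_word \<phi> (u @ v) = mmul (eval_word \<phi> u) (eval_word \<phi> v)"
  by (induction u) (simp_all add: eval_word_def mmul_assoc)

lemma eval_Nil[simp]: "eval_word \<phi> [] = One" by (simp add: eval_word_def)
lemma eval_Cons: "eval_word \<phi> (x # u) = mmul (\<phi> x) (eval_word \<phi> u)"
  by (simp add: eval_word_def)

lemma subst_Nil[simp]: "subst_word \<sigma> [] = []" by (simp add: subst_word_def)
lemma subst_Cons[simp]: "subst_word \<sigma> (x # u) = \<sigma> x @ subst_word \<sigma> u" by (simp add: subst_word_def)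
lemma subst_append[simp]: "subst_word \<sigma> (u @ v) = subst_word \<sigma> u @ subst_word \<sigma> v"
  by (simp add: subst_word_def)

lemma eval_subst: "eval_word \<phi> (subst_word \<sigma> u) = eval_word (\<lambda>x. eval_word \<phi> (\<sigma> x)) u"
  by (induction u) (simp_all add: eval_append eval_Cons)

lemma subst_subst: "subst_word \<theta> (subst_word \<sigma> u) = subst_word (\<lambda>x. subst_word \<theta> (\<sigma> x)) u"
  by (induction u) simp_all

lemma subst_id: "subst_word (\<lambda>x. [x]) u = u" by (induction u) simp_all

lemma IdM_ctx: "(u, v) \<in> Id_M \<Longrightarrow> (p @ subst_word \<theta> u @ q, p @ subst_word \<theta> v @ q) \<in> Id_M"
  by (simp add: Id_M_def eval_append eval_subst)

lemma IdM_sym: "(u, v) \<in> Id_M \<Longrightarrow> (v, u) \<in> Id_M"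
  by (simp add: Id_M_def)

lemma eval_cnt: "eval_word (\<lambda>z. if z = x then A else One) w =
  (if count_list w x = 0 then One else if count_list w x = 1 then A
   else if count_list w x = 2 then AA else Zero)"
  by (induction w) (auto simp: eval_Cons)

lemma IdM_count: "(u, v) \<in> Id_M \<Longrightarrow> min (count_list u x) 3 = min (count_list v x) 3"
proof -
  assume "(u, v) \<in> Id_M"
  then have "eval_word (\<lambda>z. if z = x then A else One) u = eval_word (\<lambda>z. if z = x then A else One) v"
    by (simp add: Id_M_def)
  then show ?thesis unfolding eval_cnt by (auto split: if_splits)
qed

fun bef :: "nat \<Rightarrow> nat \<Rightarrow> nat list \<Rightarrow> bool" where
  "bef p q [] = True"
| "bef p q (z # w) = ((z = q \<longrightarrow> p \<notin> set w) \<and> bef p q w)"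

lemma bef_append: "bef p q (xs @ ys) = (bef p q xs \<and> bef p q ys \<and> (q \<in> set xs \<longrightarrow> p \<notin> set ys))"
  by (induction xs) auto

lemma bef_notp: "p \<notin> set w \<Longrightarrow> bef p q w" by (induction w) auto
lemma bef_notq: "q \<notin> set w \<Longrightarrow> bef p q w" by (induction w) auto

lemma eval_bef: "p \<noteq> q \<Longrightarrow> eval_word (\<lambda>z. if z = p then E else if z = q then A else One) w =
  (if count_list w q \<le> 2 \<and> bef p q w then
     (if count_list w q = 0 then (if p \<in> set w then E else One)
      else if count_list w q = 1 then (if p \<in> set w then EA else A) else AA)
   else Zero)"
proof (induction w)
  case Nil then show ?case by simp
next
  case (Cons z w)
  show ?case
  proof (cases "z = p")
    case True then show ?thesis using Cons by (auto simp: eval_Cons)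
  next
    case False
    show ?thesis
    proof (cases "z = q")
      case True
      then show ?thesis using Cons \<open>z \<noteq> p\<close> by (auto simp: eval_Cons)
    next
      case False then show ?thesis using Cons \<open>z \<noteq> p\<close> by (auto simp: eval_Cons)
    qed
  qed
qed

lemma IdM_bef: assumes "(u, v) \<in> Id_M" "p \<noteq> q" "count_list u q \<le> 2"
  shows "bef p q u = bef p q v"
proof -
  have e: "eval_word (\<lambda>z. if z = p then E else if z = q then A else One) u =
           eval_word (\<lambda>z. if z = p then E else if z = q then A else One) v"
    using assms(1) by (simp add: Id_M_def)
  have "count_list v q = count_list u q"
    using IdM_count[OF assms(1), of q] assms(3) by auto
  then show ?thesis using e assms(3) unfolding eval_bef[OF assms(2)] by (auto split: if_splits)
qed

lemma in_set_cnt: "x \<in> set xs \<longleftrightarrow> 0 < count_list xs x"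
  using count_list_0_iff by (metis gr0I less_numeral_extra(3))

lemma diff_split: "length xs = length ys \<Longrightarrow> xs \<noteq> ys \<Longrightarrow>
  \<exists>X a Y b Y'. xs = X @ a # Y \<and> ys = X @ b # Y' \<and> a \<noteq> b"
proof (induction xs arbitrary: ys)
  case Nil then show ?case by simp
next
  case (Cons x xs)
  then obtain y ys' where ys: "ys = y # ys'" by (cases ys) auto
  show ?case
  proof (cases "x = y")
    case True
    then have "length xs = length ys'" "xs \<noteq> ys'" using Cons.prems ys by auto
    then obtain X a Y b Y' where "xs = X @ a # Y" "ys' = X @ b # Y'" "a \<noteq> b"
      using Cons.IH by blast
    then show ?thesis using ys True by (intro exI[of _ "x # X"]) auto
  next
    case False
    then show ?thesis using ys by (intro exI[of _ "[]"]) auto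
  qed
qed

lemma isoterm:
  assumes c2: "\<forall>z. count_list W z \<le> 2"
    and FF: "\<forall>X a e Z. W = X @ a # e # Z \<longrightarrow> a \<in> set Z \<longrightarrow> e \<in> set Z \<longrightarrow> False"
    and LL: "\<forall>X a e Z. W = X @ a # e # Z \<longrightarrow> a \<in> set X \<longrightarrow> e \<in> set X \<longrightarrow> False"
    and id: "(W, w') \<in> Id_M"
  shows "w' = W"
proof (rule ccontr)
  assume ne: "w' \<noteq> W"
  have cnt: "\<And>z. count_list w' z = count_list W z"
  proof -
    fix z show "count_list w' z = count_list W z"
      using IdM_count[OF id, of z] c2[rule_format, of z] by auto
  qed
  have bf: "\<And>p q. p \<noteq> q \<Longrightarrow> bef p q W = bef p q w'"
    using IdM_bef[OF id] c2 by blast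
  have "mset W = mset w'" by (simp add: multiset_eq_iff count_mset cnt)
  then have "length W = length w'" using mset_eq_length by blast
  then obtain X a Y b Y' where W: "W = X @ a # Y" and w': "w' = X @ b # Y'" and ab: "a \<noteq> b"
    using diff_split ne by metis
  have cnt2: "\<And>z. count_list (a # Y) z = count_list (b # Y') z"
    using cnt W w' by (metis add_left_cancel count_list_append)
  have aY': "a \<in> set Y'" using cnt2[of a] ab by (simp add: in_set_cnt split: if_splits)
  have bY: "b \<in> set Y" using cnt2[of b] ab by (simp add: in_set_cnt split: if_splits)
  have cW: "\<And>z. count_list X z + count_list (a # Y) z \<le> 2" using c2 W by (metis count_list_append)
  have cw': "\<And>z. count_list X z + count_list (b # Y') z \<le> 2" using c2 cnt w' by (metis count_list_append)
  show False
  proof (cases "a \<in> set X")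
    case aX: True
    have aY: "a \<notin> set Y" using cW[of a] aX by (auto simp: in_set_cnt)
    obtain e Z where Y: "Y = e # Z" using bY by (cases Y) auto
    have eX: "e \<notin> set X" using LL W Y aX by blast
    have ea: "e \<noteq> a" using aY Y by auto
    show False
    proof (cases "b \<in> set X")
      case False
      have "bef a b W" using W False aY ab by (simp add: bef_append bef_notp bef_notq)
      moreover have "\<not> bef a b w'" using w' aY' by (simp add: bef_append)
      ultimately show False using bf[OF ab] by simp
    next
      case bX: True
      have eb: "e \<noteq> b" using bX eX by auto
      have bZ: "b \<in> set Z" using bY Y eb by auto
      have bY': "b \<notin> set Y'" using cw'[of b] bX by (auto simp: in_set_cnt)
      have "\<not> bef b e W" using W Y bZ by (simp add: bef_append)
      moreover have "bef b e w'" using w' eX eb bY' by (simp add: bef_append bef_notp bef_notq)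
      ultimately show False using bf[of b e] eb by simp
    qed
  next
    case aX: False
    show False
    proof (cases "b \<in> set X")
      case bX: True
      have bY': "b \<notin> set Y'" using cw'[of b] bX by (auto simp: in_set_cnt)
      have "\<not> bef b a W" using W bY by (simp add: bef_append)
      moreover have "bef b a w'" using w' aX bY' ab by (simp add: bef_append bef_notp bef_notq)
      ultimately show False using bf[of b a] ab by simp
    next
      case bX: False
      show False
      proof (cases "a \<in> set Y")
        case False
        have "bef a b W" using W bX False ab by (simp add: bef_append bef_notp bef_notq)
        moreover have "\<not> bef a b w'" using w' aY' by (simp add: bef_append)
        ultimately show False using bf[OF ab] by simp
      next
        case aY: True
        show False
        proof (cases "b \<in> set Y'")
          case False
          have "\<not> bef b a W" using W bY by (simp add: bef_append)
          moreover have "bef b a w'" using w' aX False ab by (simp add: bef_append bef_notp bef_notq)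
          ultimately show False using bf[of b a] ab by simp
        next
          case bY': True
          obtain e Z where Y: "Y = e # Z" using bY by (cases Y) auto
          show False
          proof (cases "e = b")
            case True
            have "a \<in> set Z" using aY Y ab True by auto
            moreover have "b \<in> set Z"
            proof -
              have "count_list (b # Y') b \<ge> 2" using bY' by (simp add: in_set_cnt)
              then have "count_list (a # Y) b \<ge> 2" using cnt2 by simp
              then show ?thesis using Y True ab by (simp add: in_set_cnt)
            qed
            ultimately show False using FF W Y True by blast
          next
            case eb: False
            show False
            proof (cases "e = a")
              case True
              have aZ: "a \<notin> set Z" using cW[of a] Y True by (auto simp: in_set_cnt)
              have "bef a b W" using W Y True bX aZ ab by (simp add: bef_append bef_notp bef_notq)
              moreover have "\<not> bef a b w'" using w' aY' by (simp add: bef_append)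
              ultimately show False using bf[OF ab] by simp
            next
              case ea: False
              show False
              proof (cases "e \<in> set X")
                case eX: True
                have eZ: "e \<notin> set Z" using cW[of e] Y eX ea by (auto simp: in_set_cnt)
                have eY': "e \<in> set Y'"
                proof -
                  have "count_list (a # Y) e \<ge> 1" using Y by simp
                  then have "count_list (b # Y') e \<ge> 1" using cnt2 by simp
                  then show ?thesis using eb by (simp add: in_set_cnt split: if_splits)
                qed
                have "bef e b W" using W Y bX eZ ab eb by (simp add: bef_append bef_notp bef_notq)
                moreover have "\<not> bef e b w'" using w' eY' by (simp add: bef_append)
                ultimately show False using bf[of e b] eb by simp
              next
                case eX: False
                have aZ: "a \<in> set Z" using aY Y ea by auto
                have eZ: "e \<notin> set Z" using FF W Y aZ by blast
                have eY': "e \<in> set Y'"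
                proof -
                  have "count_list (a # Y) e \<ge> 1" using Y by simp
                  then have "count_list (b # Y') e \<ge> 1" using cnt2 by simp
                  then show ?thesis using eb by (simp add: in_set_cnt split: if_splits)
                qed
                have "bef e b W" using W Y bX eZ ab eb by (simp add: bef_append bef_notp bef_notq)
                moreover have "\<not> bef e b w'" using w' eY' by (simp add: bef_append)
                ultimately show False using bf[of e b] eb by simp
              qed
            qed
          qed
        qed
      qed
    qed
  qed
qed

declare upt_Suc[simp del]

definition xl :: "nat \<Rightarrow> nat" where "xl i = i + 7"
definition pr :: "nat \<Rightarrow> nat list" where "pr i = [xl i, xl (i+3)]"
definition Ik :: "nat \<Rightarrow> nat list" where "Ik k = concat (map pr [0..<Suc k])"
definition pre0 :: "nat list" where "pre0 = [xl 0, 1, xl 1, 2, xl 2, 3]"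
definition suf0 :: "nat \<Rightarrow> nat list" where "suf0 k = [4, xl (k+1), 5, xl (k+2), 6, xl (k+3)]"
definition Wk :: "nat \<Rightarrow> nat list" where "Wk k = pre0 @ 0 # Ik k @ 0 # suf0 k"

lemma xl_inj[simp]: "xl i = xl j \<longleftrightarrow> i = j" by (simp add: xl_def)
lemma xl_ne[simp]: "xl i \<noteq> 0" "xl i \<noteq> 1" "xl i \<noteq> 2" "xl i \<noteq> 3" "xl i \<noteq> 4" "xl i \<noteq> 5" "xl i \<noteq> 6"
  "0 \<noteq> xl i" "1 \<noteq> xl i" "2 \<noteq> xl i" "3 \<noteq> xl i" "4 \<noteq> xl i" "5 \<noteq> xl i" "6 \<noteq> xl i"
  "xl i \<noteq> Suc 0" "Suc 0 \<noteq> xl i"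
  by (simp_all add: xl_def)

lemma set_pr[simp]: "set (pr i) = {xl i, xl (i+3)}" by (simp add: pr_def)

lemma mem_cpr: "z \<in> set (concat (map pr xs)) \<longleftrightarrow> (\<exists>i\<in>set xs. z = xl i \<or> z = xl (i+3))"
  by (auto simp: pr_def)

lemma u1: "i < j \<Longrightarrow> [i..<j] = i # [i+1..<j]" by (simp add: upt_conv_Cons)

lemma upt_split: "a \<le> b \<Longrightarrow> b \<le> c \<Longrightarrow> [a..<c] = [a..<b] @ [b..<c]"
  using upt_add_eq_append[of a b "c - b"] by simp

lemma upt4: "i + 4 \<le> j \<Longrightarrow> [i..<j] = [i, i+1, i+2, i+3] @ [i+4..<j]"
proof -
  assume a: "i + 4 \<le> j"
  have e: "Suc (Suc (Suc (Suc i))) = i + 4" by simp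
  show ?thesis using a by (simp add: u1 e)
qed

lemma Ik_split: "i \<le> Suc k \<Longrightarrow> Ik k = concat (map pr [0..<i]) @ concat (map pr [i..<Suc k])"
  unfolding Ik_def by (subst upt_split[of 0 i]) auto

lemma Ik_mid: "i + 3 \<le> k \<Longrightarrow> Ik k = concat (map pr [0..<i]) @
   [xl i, xl (i+3), xl (i+1), xl (i+4), xl (i+2), xl (i+5), xl (i+3), xl (i+6)] @
   concat (map pr [i+4..<Suc k])"
proof -
  assume a: "i + 3 \<le> k"
  have "[i..<Suc k] = [i, i+1, i+2, i+3] @ [i+4..<Suc k]" using a by (intro upt4) simp
  then show ?thesis using a Ik_split[of i k] by (simp add: pr_def add.assoc)
qed

lemma Ik_end: "Ik (n+2) = concat (map pr [0..<n]) @
   [xl n, xl (n+3), xl (n+1), xl (n+4), xl (n+2), xl (n+5)]"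
proof -
  have "[n..<Suc (n+2)] = [n, n+1, n+2]" by (simp add: u1)
  then show ?thesis using Ik_split[of n "n+2"] by (simp add: pr_def add.assoc)
qed

lemma Ik_end2: "Ik (n+2) = concat (map pr [0..<n+1]) @ [xl (n+1), xl (n+4), xl (n+2), xl (n+5)]"
proof -
  have "[n+1..<Suc (n+2)] = [n+1, n+2]" by (simp add: u1)
  then show ?thesis using Ik_split[of "n+1" "n+2"] by (simp add: pr_def add.assoc)
qed

lemma Ik_end1: "Ik k = concat (map pr [0..<k]) @ [xl k, xl (k+3)]"
proof -
  have "[k..<Suc k] = [k]" by (simp add: u1)
  then show ?thesis using Ik_split[of k k] by (simp add: pr_def)
qed

lemma Ik_start: "Ik k = [xl 0, xl 3] @ concat (map pr [1..<Suc k])"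
  by (simp add: Ik_def pr_def u1)

lemma Ik_start2: "1 \<le> k \<Longrightarrow> Ik k = [xl 0, xl 3, xl 1, xl 4] @ concat (map pr [2..<Suc k])"
  by (simp add: Ik_def pr_def u1 numeral_2_eq_2)

lemma Ik_start3: "2 \<le> k \<Longrightarrow> Ik k = [xl 0, xl 3, xl 1, xl 4, xl 2, xl 5] @ concat (map pr [3..<Suc k])"
  by (simp add: Ik_def pr_def u1 numeral_2_eq_2 numeral_3_eq_3)

lemma set_Ik: "z \<in> set (Ik k) \<longleftrightarrow> (\<exists>i\<le>k. z = xl i \<or> z = xl (i+3))"
  by (auto simp: Ik_def mem_cpr less_Suc_eq_le)

lemma lin_notin_Ik[simp]: "0 \<notin> set (Ik k)" "1 \<notin> set (Ik k)" "2 \<notin> set (Ik k)" "3 \<notin> set (Ik k)"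
  "4 \<notin> set (Ik k)" "5 \<notin> set (Ik k)" "6 \<notin> set (Ik k)" "Suc 0 \<notin> set (Ik k)"
  by (auto simp: set_Ik)

lemma len_Ik[simp]: "length (Ik k) = 2 * k + 2"
  by (induction k) (simp_all add: Ik_def pr_def upt_Suc)

lemma cnt_lin: "count_list (Wk k) 1 = 1" "count_list (Wk k) 2 = 1" "count_list (Wk k) 3 = 1"
  "count_list (Wk k) 4 = 1" "count_list (Wk k) 5 = 1" "count_list (Wk k) 6 = 1"
  "count_list (Wk k) 0 = 2"
  by (simp_all add: Wk_def pre0_def suf0_def)

definition tab :: "nat \<Rightarrow> nat list \<Rightarrow> nat \<Rightarrow> nat list \<Rightarrow> nat list \<Rightarrow> nat list \<Rightarrow> bool" where
 "tab k W c A0 J0 B0 \<longleftrightarrow> W = A0 @ c # J0 @ c # B0 \<and> c \<notin> set A0 \<and> c \<notin> set J0 \<and> c \<notin> set B0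
   \<and> J0 \<noteq> [] \<and> (hd J0 \<in> set A0 \<or> count_list W (hd J0) = 1)
   \<and> (last J0 \<in> set B0 \<or> count_list W (last J0) = 1)
   \<and> ((\<forall>z\<in>set J0. count_list W z = 2) \<longrightarrow>
        (length J0 = 4 \<and> J0!1 \<in> set B0 \<and> J0!2 \<in> set A0) \<or>
        (length J0 = 2*k+2 \<and> hd J0 \<in> set A0 \<and> last J0 \<in> set B0))"

lemma tab_y: "tab k (Wk k) 0 pre0 (Ik k) (suf0 k)"
proof -
  have h: "hd (Ik k) = xl 0" by (simp add: Ik_start)
  have l: "last (Ik k) = xl (k+3)" by (simp add: Ik_end1)
  have ne: "Ik k \<noteq> []" by (simp add: Ik_start)
  show ?thesis unfolding tab_def using h l ne
    by (simp add: Wk_def pre0_def suf0_def)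
qed

lemma tab_x0: "tab k (Wk k) (xl 0) [] [1, xl 1, 2, xl 2, 3, 0] (xl 3 # concat (map pr [1..<Suc k]) @ 0 # suf0 k)"
proof -
  have "xl 0 \<notin> set (concat (map pr [1..<Suc k]))" by (auto simp: mem_cpr)
  then show ?thesis unfolding tab_def
    by (simp add: Wk_def pre0_def suf0_def Ik_start cnt_lin[unfolded Wk_def pre0_def suf0_def])
qed

lemma tab_x1: "3 \<le> k \<Longrightarrow> tab k (Wk k) (xl 1) [xl 0, 1] [2, xl 2, 3, 0, xl 0, xl 3]
   (xl 4 # concat (map pr [2..<Suc k]) @ 0 # suf0 k)"
proof -
  assume k: "3 \<le> k"
  have "xl 1 \<notin> set (concat (map pr [2..<Suc k]))" by (auto simp: mem_cpr)
  moreover have "xl 3 \<in> set (concat (map pr [2..<Suc k]))" using k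
    by (auto simp: mem_cpr intro!: bexI[of _ 3])
  ultimately show ?thesis unfolding tab_def using k
    by (simp add: Wk_def pre0_def suf0_def Ik_start2 cnt_lin[unfolded Wk_def pre0_def suf0_def])
qed

lemma tab_x2: "4 \<le> k \<Longrightarrow> tab k (Wk k) (xl 2) [xl 0, 1, xl 1, 2] [3, 0, xl 0, xl 3, xl 1, xl 4]
   (xl 5 # concat (map pr [3..<Suc k]) @ 0 # suf0 k)"
proof -
  assume k: "4 \<le> k"
  have "xl 2 \<notin> set (concat (map pr [3..<Suc k]))" by (auto simp: mem_cpr)
  moreover have "xl 4 \<in> set (concat (map pr [3..<Suc k]))" using k
    by (auto simp: mem_cpr intro!: bexI[of _ 4])
  ultimately show ?thesis unfolding tab_def using k
    by (simp add: Wk_def pre0_def suf0_def Ik_start3 cnt_lin[unfolded Wk_def pre0_def suf0_def])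
qed

lemma mem_cpr_upt: "xl j \<in> set (concat (map pr [a..<b])) \<longleftrightarrow> (a \<le> j \<and> j < b) \<or> (a + 3 \<le> j \<and> j < b + 3)"
proof
  assume "xl j \<in> set (concat (map pr [a..<b]))"
  then show "(a \<le> j \<and> j < b) \<or> (a + 3 \<le> j \<and> j < b + 3)" by (auto simp: mem_cpr)
next
  assume h: "(a \<le> j \<and> j < b) \<or> (a + 3 \<le> j \<and> j < b + 3)"
  show "xl j \<in> set (concat (map pr [a..<b]))"
  proof (cases "a \<le> j \<and> j < b")
    case True then show ?thesis by (auto simp: mem_cpr intro!: bexI[of _ j])
  next
    case False then show ?thesis using h by (auto simp: mem_cpr intro!: bexI[of _ "j - 3"])
  qed
qed

lemma tab_mid: "i + 3 \<le> k \<Longrightarrow> tab k (Wk k) (xl (i+3)) (pre0 @ 0 # concat (map pr [0..<i]) @ [xl i])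
  [xl (i+1), xl (i+4), xl (i+2), xl (i+5)] (xl (i+6) # concat (map pr [i+4..<Suc k]) @ 0 # suf0 k)"
proof -
  assume k: "i + 3 \<le> k"
  have h: "xl (i+1) \<in> set (pre0 @ 0 # concat (map pr [0..<i]) @ [xl i])"
  proof (cases "i \<le> 1")
    case True then show ?thesis by (auto simp: pre0_def le_Suc_eq)
  next
    case False
    then have "xl (i+1) \<in> set (concat (map pr [0..<i]))" by (subst mem_cpr_upt) auto
    then show ?thesis by simp
  qed
  have a2: "xl (i+2) \<in> set (pre0 @ 0 # concat (map pr [0..<i]) @ [xl i])"
  proof (cases "i = 0")
    case True then show ?thesis by (auto simp: pre0_def)
  next
    case False
    then have "xl (i+2) \<in> set (concat (map pr [0..<i]))" by (subst mem_cpr_upt) auto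
    then show ?thesis by simp
  qed
  have l: "xl (i+5) \<in> set (xl (i+6) # concat (map pr [i+4..<Suc k]) @ 0 # suf0 k)"
  proof (cases "i + 5 \<le> k")
    case True
    then have "xl (i+5) \<in> set (concat (map pr [i+4..<Suc k]))" by (subst mem_cpr_upt) auto
    then show ?thesis by simp
  next
    case False then show ?thesis using k by (auto simp: suf0_def)
  qed
  have b1: "xl (i+4) \<in> set (xl (i+6) # concat (map pr [i+4..<Suc k]) @ 0 # suf0 k)"
  proof (cases "i + 4 \<le> k")
    case True
    then have "xl (i+4) \<in> set (concat (map pr [i+4..<Suc k]))" by (subst mem_cpr_upt) auto
    then show ?thesis by simp
  next
    case False then show ?thesis using k by (auto simp: suf0_def)
  qed
  have W: "Wk k = (pre0 @ 0 # concat (map pr [0..<i]) @ [xl i]) @ xl (i+3) #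
     [xl (i+1), xl (i+4), xl (i+2), xl (i+5)] @ xl (i+3) # (xl (i+6) # concat (map pr [i+4..<Suc k]) @ 0 # suf0 k)"
    using k by (simp add: Wk_def Ik_mid)
  show ?thesis unfolding tab_def using h a2 l b1 W k
    by (simp add: pre0_def suf0_def mem_cpr_upt)
qed

lemma tab_e1: "2 \<le> n \<Longrightarrow> tab (n+2) (Wk (n+2)) (xl (n+3)) (pre0 @ 0 # concat (map pr [0..<n]) @ [xl n])
  [xl (n+1), xl (n+4), xl (n+2), xl (n+5), 0, 4] [5, xl (n+4), 6, xl (n+5)]"
proof -
  assume n: "2 \<le> n"
  have "xl (n+1) \<in> set (concat (map pr [0..<n]))" using n by (subst mem_cpr_upt) auto
  then have h: "xl (n+1) \<in> set (pre0 @ 0 # concat (map pr [0..<n]) @ [xl n])" by simp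
  have W: "Wk (n+2) = (pre0 @ 0 # concat (map pr [0..<n]) @ [xl n]) @ xl (n+3) #
     [xl (n+1), xl (n+4), xl (n+2), xl (n+5), 0, 4] @ xl (n+3) # [5, xl (n+4), 6, xl (n+5)]"
    using Ik_end[of n] by (simp add: Wk_def suf0_def)
  have c4: "count_list (Wk (n+2)) 4 = 1" by (rule cnt_lin)
  show ?thesis unfolding tab_def using h W c4
    by (simp add: pre0_def mem_cpr_upt)
qed

lemma tab_e2: "1 \<le> n \<Longrightarrow> tab (n+2) (Wk (n+2)) (xl (n+4)) (pre0 @ 0 # concat (map pr [0..<n+1]) @ [xl (n+1)])
  [xl (n+2), xl (n+5), 0, 4, xl (n+3), 5] [6, xl (n+5)]"
proof -
  assume n: "1 \<le> n"
  have "xl (n+2) \<in> set (concat (map pr [0..<n+1]))" using n by (subst mem_cpr_upt) auto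
  then have h: "xl (n+2) \<in> set (pre0 @ 0 # concat (map pr [0..<n+1]) @ [xl (n+1)])" by simp
  have W: "Wk (n+2) = (pre0 @ 0 # concat (map pr [0..<n+1]) @ [xl (n+1)]) @ xl (n+4) #
     [xl (n+2), xl (n+5), 0, 4, xl (n+3), 5] @ xl (n+4) # [6, xl (n+5)]"
    using Ik_end2[of n] by (simp add: Wk_def suf0_def)
  have c5: "count_list (Wk (n+2)) 5 = 1" by (rule cnt_lin)
  have c4: "count_list (Wk (n+2)) 4 = 1" by (rule cnt_lin)
  show ?thesis unfolding tab_def using h W c5 c4
    by (simp add: pre0_def mem_cpr_upt)
qed

lemma tab_e3: "tab k (Wk k) (xl (k+3)) (pre0 @ 0 # concat (map pr [0..<k]) @ [xl k])
  [0, 4, xl (k+1), 5, xl (k+2), 6] []"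
proof -
  have W: "Wk k = (pre0 @ 0 # concat (map pr [0..<k]) @ [xl k]) @ xl (k+3) #
     [0, 4, xl (k+1), 5, xl (k+2), 6] @ xl (k+3) # []"
    by (simp add: Wk_def Ik_end1 suf0_def)
  have c6: "count_list (Wk k) 6 = 1" by (rule cnt_lin)
  have c4: "count_list (Wk k) 4 = 1" by (rule cnt_lin)
  show ?thesis unfolding tab_def using W c6 c4
    by (simp add: pre0_def mem_cpr_upt)
qed

lemma tab_ex: assumes k: "5 \<le> k" and c: "c = 0 \<or> (\<exists>i\<le>k+3. c = xl i)"
  shows "\<exists>A0 J0 B0. tab k (Wk k) c A0 J0 B0"
proof (cases "c = 0")
  case True then show ?thesis using tab_y by blast
next
  case False
  then obtain i where i: "i \<le> k+3" "c = xl i" using c by blast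
  consider "i = 0" | "i = 1" | "i = 2" | "3 \<le> i \<and> i \<le> k" | "i = k+1" | "i = k+2" | "i = k+3"
    using i(1) by linarith
  then show ?thesis
  proof cases
    case 1 then show ?thesis using tab_x0 i by blast
  next
    case 2 then show ?thesis using tab_x1[of k] i k by auto
  next
    case 3 then show ?thesis using tab_x2[of k] i k by auto
  next
    case 4
    then have "(i - 3) + 3 \<le> k" "i = (i - 3) + 3" by auto
    then show ?thesis using tab_mid[of "i-3" k] i by metis
  next
    case 5
    obtain n where n: "k = n + 2" "2 \<le> n" using k by (intro that[of "k-2"]) auto
    have cc: "c = xl (n+3)" using i(2) 5 n(1) by simp
    show ?thesis unfolding cc n(1) using tab_e1[OF n(2)] by blast
  next
    case 6
    obtain n where n: "k = n + 2" "1 \<le> n" using k by (intro that[of "k-2"]) auto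
    have cc: "c = xl (n+4)" using i(2) 6 n(1) by simp
    show ?thesis unfolding cc n(1) using tab_e2[OF n(2)] by blast
  next
    case 7 then show ?thesis using tab_e3[of k] i by blast
  qed
qed

lemma tab_cnt: "tab k W c A0 J0 B0 \<Longrightarrow> count_list W c = 2"
  by (simp add: tab_def)

lemma classify: assumes "2 \<le> count_list (Wk k) c" shows "c = 0 \<or> (\<exists>i\<le>k+3. c = xl i)"
proof -
  have cin: "c \<in> set (Wk k)" using assms by (simp add: in_set_cnt)
  have "c \<notin> {1,2,3,4,5,6}" using assms cnt_lin by auto
  then show ?thesis using cin
    by (auto simp: Wk_def pre0_def suf0_def set_Ik)
qed

lemma G1: "5 \<le> k \<Longrightarrow> count_list (Wk k) z \<le> 2"
proof (rule ccontr)
  assume k: "5 \<le> k" and "\<not> count_list (Wk k) z \<le> 2"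
  then have "2 \<le> count_list (Wk k) z" by simp
  then obtain A0 J0 B0 where "tab k (Wk k) z A0 J0 B0" using tab_ex[OF k classify] by blast
  then have "count_list (Wk k) z = 2" by (rule tab_cnt)
  then show False using \<open>\<not> count_list (Wk k) z \<le> 2\<close> by simp
qed

lemma first_occ: "xs @ x # ys = xs' @ x # ys' \<Longrightarrow> x \<notin> set xs \<Longrightarrow> x \<notin> set xs' \<Longrightarrow> xs = xs' \<and> ys = ys'"
proof (induction xs arbitrary: xs')
  case Nil then show ?case by (cases xs') auto
next
  case (Cons a xs) then show ?case by (cases xs') auto
qed

lemma tab_unique: assumes t: "tab k W c A0 J0 B0" and W: "W = Ax @ c # J @ c # Bx"
  shows "Ax = A0 \<and> J = J0 \<and> Bx = B0"
proof -
  have "count_list W c = 2" using tab_cnt[OF t] .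
  then have "c \<notin> set Ax" "c \<notin> set J" "c \<notin> set Bx" using W by (auto simp: in_set_cnt)
  moreover have "c \<notin> set A0" "c \<notin> set J0" "c \<notin> set B0" "W = A0 @ c # J0 @ c # B0"
    using t by (auto simp: tab_def)
  ultimately show ?thesis using W first_occ[of Ax c "J @ c # Bx" A0 "J0 @ c # B0"]
    first_occ[of J c Bx J0 B0] by auto
qed

lemma tab_of_cnt: "5 \<le> k \<Longrightarrow> 2 \<le> count_list (Wk k) c \<Longrightarrow> \<exists>A0 J0 B0. tab k (Wk k) c A0 J0 B0"
  by (rule tab_ex[OF _ classify])

lemma FF: assumes k: "5 \<le> k" and W: "Wk k = X @ a # e # Z" and aZ: "a \<in> set Z" and eZ: "e \<in> set Z"
  shows False
proof -
  have "2 \<le> count_list (Wk k) a" using W aZ by (simp add: in_set_cnt)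
  then obtain A0 J0 B0 where t: "tab k (Wk k) a A0 J0 B0" using tab_of_cnt[OF k] by blast
  have c2: "count_list (Wk k) a = 2" using tab_cnt[OF t] .
  have aX: "a \<notin> set X" using c2 W aZ by (auto simp: in_set_cnt split: if_splits)
  have t': "Wk k = A0 @ a # J0 @ a # B0" "a \<notin> set A0" "J0 \<noteq> []"
    "hd J0 \<in> set A0 \<or> count_list (Wk k) (hd J0) = 1" using t by (auto simp: tab_def)
  then have "X = A0 \<and> e # Z = J0 @ a # B0" using W aX first_occ[of X a "e # Z" A0 "J0 @ a # B0"] by auto
  then have X: "X = A0" and e: "e = hd J0" using t'(3) by (auto simp: neq_Nil_conv)
  have ce: "count_list (Wk k) e \<le> 2" using G1[OF k] .
  show False
  proof (cases "hd J0 \<in> set A0")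
    case True
    then have "3 \<le> count_list (Wk k) e" using W X e eZ by (simp add: in_set_cnt)
    then show False using ce by simp
  next
    case False
    then have "count_list (Wk k) e = 1" using t'(4) e by simp
    moreover have "2 \<le> count_list (Wk k) e" using W eZ by (simp add: in_set_cnt)
    ultimately show False by simp
  qed
qed

lemma LL: assumes k: "5 \<le> k" and W: "Wk k = X @ a # e # Z" and aX: "a \<in> set X" and eX: "e \<in> set X"
  shows False
proof -
  have "2 \<le> count_list (Wk k) e" using W eX by (simp add: in_set_cnt)
  then obtain A0 J0 B0 where t: "tab k (Wk k) e A0 J0 B0" using tab_of_cnt[OF k] by blast
  have c2: "count_list (Wk k) e = 2" using tab_cnt[OF t] .
  have eZ: "e \<notin> set Z" using c2 W eX by (auto simp: in_set_cnt split: if_splits)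
  have t': "Wk k = A0 @ e # J0 @ e # B0" "e \<notin> set B0" "J0 \<noteq> []"
    "last J0 \<in> set B0 \<or> count_list (Wk k) (last J0) = 1" using t by (auto simp: tab_def)
  have r: "rev Z @ e # (a # rev X) = rev B0 @ e # (rev J0 @ e # rev A0)"
    using W t'(1) by (metis rev.simps(2) rev_append append.assoc append_Cons append_Nil)
  have "rev Z = rev B0 \<and> a # rev X = rev J0 @ e # rev A0"
    using first_occ[OF r] eZ t'(2) by simp
  then have Z: "Z = B0" and ar: "a # rev X = rev J0 @ e # rev A0" by simp_all
  obtain J1 b where J0: "J0 = J1 @ [b]" using t'(3) by (metis rev_exhaust)
  have a: "a = last J0" using ar J0 by simp
  have ca: "count_list (Wk k) a \<le> 2" using G1[OF k] .
  show False
  proof (cases "last J0 \<in> set B0")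
    case True
    then have "3 \<le> count_list (Wk k) a" using W Z a aX by (simp add: in_set_cnt)
    then show False using ca by simp
  next
    case False
    then have "count_list (Wk k) a = 1" using t'(4) a by simp
    moreover have "2 \<le> count_list (Wk k) a" using W aX by (simp add: in_set_cnt)
    ultimately show False by simp
  qed
qed

lemma G3: assumes k: "5 \<le> k" and W: "Wk k = Ax @ c # J @ c # Bx"
  and pure: "\<forall>z\<in>set J. count_list (Wk k) z = 2"
  shows "(length J = 4 \<and> J!1 \<in> set Bx \<and> J!2 \<in> set Ax) \<or>
         (length J = 2*k+2 \<and> hd J \<in> set Ax \<and> last J \<in> set Bx)"
proof -
  have "2 \<le> count_list (Wk k) c" using W by simp
  then obtain A0 J0 B0 where t: "tab k (Wk k) c A0 J0 B0" using tab_of_cnt[OF k] by blast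
  then have "Ax = A0 \<and> J = J0 \<and> Bx = B0" using tab_unique W by blast
  moreover have "(\<forall>z\<in>set J0. count_list (Wk k) z = 2) \<longrightarrow>
        (length J0 = 4 \<and> J0!1 \<in> set B0 \<and> J0!2 \<in> set A0) \<or>
        (length J0 = 2*k+2 \<and> hd J0 \<in> set A0 \<and> last J0 \<in> set B0)"
    using t unfolding tab_def by blast
  ultimately show ?thesis using pure by simp
qed

lemma Wk_iso: assumes k: "5 \<le> k" and id: "(Wk k, w') \<in> Id_M" shows "w' = Wk k"
  using isoterm[OF _ _ _ id] G1[OF k] FF[OF k] LL[OF k] by blast

lemma cnt_subst_ge: "z \<in> set (\<theta> x) \<Longrightarrow> count_list U x \<le> count_list (subst_word \<theta> U) z"
proof (induction U)
  case Nil then show ?case by simp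
next
  case (Cons a U)
  then show ?case by (auto simp: in_set_cnt)
qed

lemma set_subst: "x \<in> set V \<Longrightarrow> set (\<theta> x) \<subseteq> set (subst_word \<theta> V)"
  by (induction V) auto

lemma set_subst_ex: "z \<in> set (subst_word \<theta> V) \<Longrightarrow> \<exists>x\<in>set V. z \<in> set (\<theta> x)"
  by (induction V) auto

lemma subst_nil: "(\<forall>z\<in>set V. \<theta> z = []) \<Longrightarrow> subst_word \<theta> V = []"
  by (induction V) auto

lemma len_subst1: "(\<forall>z\<in>set V. length (\<theta> z) = 1) \<Longrightarrow> length (subst_word \<theta> V) = length V"
  by (induction V) auto

lemma len_subst_le: "(\<forall>z\<in>set V. length (\<theta> z) \<le> 1) \<Longrightarrow> length (subst_word \<theta> V) \<le> length V"
  by (induction V) (auto simp: add_le_mono)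

lemma split2: "2 \<le> count_list U x \<Longrightarrow> \<exists>U1 U2 U3. U = U1 @ x # U2 @ x # U3"
proof -
  assume h: "2 \<le> count_list U x"
  then have "x \<in> set U" by (simp add: in_set_cnt)
  then obtain U1 R where U: "U = U1 @ x # R" "x \<notin> set U1" by (metis split_list_first)
  then have "x \<in> set R" using h by (auto simp: in_set_cnt)
  then obtain U2 U3 where "R = U2 @ x # U3" by (metis split_list)
  then show ?thesis using U by blast
qed

lemma no3: "W = Ax @ c # J @ c # Bx \<Longrightarrow> count_list W z \<le> 2 \<Longrightarrow> z \<in> set Ax \<Longrightarrow> z \<in> set J \<Longrightarrow> z \<in> set Bx \<Longrightarrow> False"
  by (auto simp: in_set_cnt split: if_splits)

context
  fixes m k :: nat and \<theta> :: "nat \<Rightarrow> nat list" and P Q :: "nat list"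
  assumes m5: "5 \<le> m" and k5: "5 \<le> k"
    and emb: "P @ subst_word \<theta> (Wk m) @ Q = Wk k"
begin

lemma T1: assumes "2 \<le> count_list (Wk m) x" shows "length (\<theta> x) \<le> 1"
proof (rule ccontr)
  assume "\<not> length (\<theta> x) \<le> 1"
  then obtain d1 d2 r where th: "\<theta> x = d1 # d2 # r" by (cases "\<theta> x"; cases "tl (\<theta> x)") auto
  obtain U1 U2 U3 where U: "Wk m = U1 @ x # U2 @ x # U3" using split2[OF assms] by blast
  have "Wk k = (P @ subst_word \<theta> U1) @ d1 # d2 # (r @ subst_word \<theta> U2 @ d1 # d2 # r @ subst_word \<theta> U3 @ Q)"
    using emb U th by simp
  then show False using FF[OF k5] by fastforce
qed

lemma cnt_emb: "count_list (subst_word \<theta> (Wk m)) z \<le> count_list (Wk k) z"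
  using emb by (metis count_list_append le_add1 le_add2 le_trans)

lemma INT: assumes U: "Wk m = U1 @ x # V @ x # U3" and th: "\<theta> x = [c]"
    and cV: "\<forall>z\<in>set V. 2 \<le> count_list (Wk m) z"
  shows "Wk k = (P @ subst_word \<theta> U1) @ c # subst_word \<theta> V @ c # (subst_word \<theta> U3 @ Q)"
    and "(length (subst_word \<theta> V) = 4 \<and> (subst_word \<theta> V)!1 \<in> set (subst_word \<theta> U3 @ Q)
            \<and> (subst_word \<theta> V)!2 \<in> set (P @ subst_word \<theta> U1)) \<or>
         (length (subst_word \<theta> V) = 2*k+2 \<and> hd (subst_word \<theta> V) \<in> set (P @ subst_word \<theta> U1)
            \<and> last (subst_word \<theta> V) \<in> set (subst_word \<theta> U3 @ Q))"
proof -
  show W: "Wk k = (P @ subst_word \<theta> U1) @ c # subst_word \<theta> V @ c # (subst_word \<theta> U3 @ Q)"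
    using emb U th by simp
  have pure: "\<forall>z\<in>set (subst_word \<theta> V). count_list (Wk k) z = 2"
  proof
    fix z assume "z \<in> set (subst_word \<theta> V)"
    then obtain x' where x': "x' \<in> set V" "z \<in> set (\<theta> x')" using set_subst_ex by blast
    have "2 \<le> count_list (Wk m) x'" using cV x' by blast
    also have "\<dots> \<le> count_list (subst_word \<theta> (Wk m)) z" using cnt_subst_ge x' by blast
    also have "\<dots> \<le> count_list (Wk k) z" by (rule cnt_emb)
    finally show "count_list (Wk k) z = 2" using G1[OF k5, of z] by simp
  qed
  show "(length (subst_word \<theta> V) = 4 \<and> (subst_word \<theta> V)!1 \<in> set (subst_word \<theta> U3 @ Q)
            \<and> (subst_word \<theta> V)!2 \<in> set (P @ subst_word \<theta> U1)) \<or>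
         (length (subst_word \<theta> V) = 2*k+2 \<and> hd (subst_word \<theta> V) \<in> set (P @ subst_word \<theta> U1)
            \<and> last (subst_word \<theta> V) \<in> set (subst_word \<theta> U3 @ Q))"
    using G3[OF k5 W pure] .
qed

lemma cntU: "i \<le> m + 3 \<Longrightarrow> count_list (Wk m) (xl i) = 2"
proof -
  assume "i \<le> m + 3"
  then obtain A0 J0 B0 where "tab m (Wk m) (xl i) A0 J0 B0" using tab_ex[OF m5] by blast
  then show ?thesis by (rule tab_cnt)
qed

lemma len1: "i \<le> m + 3 \<Longrightarrow> length (\<theta> (xl i)) \<le> 1"
  using T1 cntU by simp

lemma cascade: assumes i: "i + 3 \<le> m" and nz: "\<theta> (xl (i+3)) \<noteq> []"
  shows "\<theta> (xl (i+1)) \<noteq> [] \<and> \<theta> (xl (i+4)) \<noteq> [] \<and> \<theta> (xl (i+2)) \<noteq> [] \<and> \<theta> (xl (i+5)) \<noteq> []"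
proof -
  obtain A0 B0 where U: "Wk m = A0 @ xl (i+3) # [xl (i+1), xl (i+4), xl (i+2), xl (i+5)] @ xl (i+3) # B0"
    using tab_mid[OF i] unfolding tab_def by blast
  obtain d where d: "\<theta> (xl (i+3)) = [d]" using len1[of "i+3"] i nz
    by (cases "\<theta> (xl (i+3))") auto
  have cV: "\<forall>z\<in>set [xl (i+1), xl (i+4), xl (i+2), xl (i+5)]. 2 \<le> count_list (Wk m) z"
    using cntU i by auto
  have l: "length (subst_word \<theta> [xl (i+1), xl (i+4), xl (i+2), xl (i+5)]) = 4 \<or>
           length (subst_word \<theta> [xl (i+1), xl (i+4), xl (i+2), xl (i+5)]) = 2*k+2"
    using INT(2)[OF U d cV] by blast
  have "length (\<theta> (xl (i+1))) \<le> 1" "length (\<theta> (xl (i+4))) \<le> 1"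
       "length (\<theta> (xl (i+2))) \<le> 1" "length (\<theta> (xl (i+5))) \<le> 1"
    using len1 i by simp_all
  then show ?thesis using l k5 by auto
qed

lemma cIk: "\<forall>z\<in>set (Ik m). 2 \<le> count_list (Wk m) z"
  using cntU by (auto simp: set_Ik)

lemma yINT: assumes th: "\<theta> 0 = [c]"
  shows "Wk k = (P @ subst_word \<theta> pre0) @ c # subst_word \<theta> (Ik m) @ c # (subst_word \<theta> (suf0 m) @ Q)"
    and "(length (subst_word \<theta> (Ik m)) = 4 \<and> (subst_word \<theta> (Ik m))!1 \<in> set (subst_word \<theta> (suf0 m) @ Q)
            \<and> (subst_word \<theta> (Ik m))!2 \<in> set (P @ subst_word \<theta> pre0)) \<or>
         (length (subst_word \<theta> (Ik m)) = 2*k+2 \<and> hd (subst_word \<theta> (Ik m)) \<in> set (P @ subst_word \<theta> pre0)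
            \<and> last (subst_word \<theta> (Ik m)) \<in> set (subst_word \<theta> (suf0 m) @ Q))"
  using INT[of pre0 0 "Ik m" "suf0 m" c, OF _ th cIk] by (simp_all add: Wk_def)

lemma Ik_split_mid: "3 \<le> n \<Longrightarrow> Ik (n+2) = [xl 0, xl 3, xl 1, xl 4, xl 2, xl 5] @ concat (map pr [3..<n]) @
   [xl n, xl (n+3), xl (n+1), xl (n+4), xl (n+2), xl (n+5)]"
proof -
  assume n: "3 \<le> n"
  have "[0..<n] = [0..<3] @ [3..<n]" using n by (intro upt_split) auto
  moreover have "[0..<3] = [0,1,2]" by (simp add: u1 numeral_3_eq_3)
  ultimately have "concat (map pr [0..<n]) = [xl 0, xl 3, xl 1, xl 4, xl 2, xl 5] @ concat (map pr [3..<n])"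
    by (simp add: pr_def)
  then show ?thesis using Ik_end[of n] by simp
qed

lemma claimA: assumes th: "\<theta> 0 = [c]" shows "\<exists>j. 3 \<le> j \<and> j \<le> m \<and> \<theta> (xl j) \<noteq> []"
proof (rule ccontr)
  assume "\<not> (\<exists>j. 3 \<le> j \<and> j \<le> m \<and> \<theta> (xl j) \<noteq> [])"
  then have z: "\<And>j. 3 \<le> j \<Longrightarrow> j \<le> m \<Longrightarrow> \<theta> (xl j) = []" by blast
  obtain n where n: "m = n + 2" "3 \<le> n" using m5 by (intro that[of "m-2"]) auto
  have mid: "subst_word \<theta> (concat (map pr [3..<n])) = []"
  proof (rule subst_nil, rule ballI)
    fix z assume "z \<in> set (concat (map pr [3..<n]))"
    then obtain i where "3 \<le> i" "i < n" "z = xl i \<or> z = xl (i+3)" by (auto simp: mem_cpr)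
    then show "\<theta> z = []" using z n by auto
  qed
  define J1 where "J1 = \<theta> (xl 0) @ \<theta> (xl 1) @ \<theta> (xl 2)"
  define J2 where "J2 = \<theta> (xl (n+3)) @ \<theta> (xl (n+4)) @ \<theta> (xl (n+5))"
  have z6: "\<theta> (xl 3) = []" "\<theta> (xl 4) = []" "\<theta> (xl 5) = []"
    "\<theta> (xl n) = []" "\<theta> (xl (n+1)) = []" "\<theta> (xl (n+2)) = []"
    using z n m5 by auto
  have J: "subst_word \<theta> (Ik m) = J1 @ J2"
    unfolding n(1) Ik_split_mid[OF n(2)] using mid z6 by (simp add: J1_def J2_def)
  define A where "A = P @ subst_word \<theta> pre0"
  define B where "B = subst_word \<theta> (suf0 m) @ Q"
  have J1A: "set J1 \<subseteq> set A"
    using set_subst[of "xl 0" pre0 \<theta>] set_subst[of "xl 1" pre0 \<theta>] set_subst[of "xl 2" pre0 \<theta>]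
    by (auto simp: J1_def A_def pre0_def)
  have J2B: "set J2 \<subseteq> set B"
    using set_subst[of "xl (n+3)" "suf0 m" \<theta>] set_subst[of "xl (n+4)" "suf0 m" \<theta>]
      set_subst[of "xl (n+5)" "suf0 m" \<theta>] n(1)
    by (auto simp: J2_def B_def suf0_def)
  have l6: "length (J1 @ J2) \<le> 6"
    using len1[of 0] len1[of 1] len1[of 2] len1[of "n+3"] len1[of "n+4"] len1[of "n+5"] n
    by (simp add: J1_def J2_def)
  have Wd: "Wk k = A @ c # (J1 @ J2) @ c # B" using yINT(1)[OF th] J by (simp add: A_def B_def)
  have g: "(length (J1 @ J2) = 4 \<and> (J1 @ J2)!1 \<in> set B \<and> (J1 @ J2)!2 \<in> set A) \<or>
         (length (J1 @ J2) = 2*k+2)"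
    using yINT(2)[OF th] J by (auto simp: A_def B_def)
  have c2: "\<And>z. count_list (Wk k) z \<le> 2" using G1[OF k5] .
  show False
  proof (cases "length (J1 @ J2) = 4")
    case False then show False using g l6 k5 by auto
  next
    case True
    then have i1: "(J1 @ J2)!1 \<in> set B" and i2: "(J1 @ J2)!2 \<in> set A" using g k5 by auto
    show False
    proof (cases "2 \<le> length J1")
      case True
      then have "(J1 @ J2)!1 = J1!1" by (simp add: nth_append)
      then have "(J1 @ J2)!1 \<in> set A" using J1A True by (metis nth_mem less_le_trans one_less_numeral_iff semiring_norm(76) subsetD)
      moreover have "(J1 @ J2)!1 \<in> set (J1 @ J2)" using \<open>length (J1 @ J2) = 4\<close> by (intro nth_mem) simp
      ultimately show False using no3[OF Wd c2] i1 by blast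
    next
      case False
      then have "(J1 @ J2)!2 = J2!(2 - length J1)" by (simp add: nth_append)
      moreover have "2 - length J1 < length J2" using False \<open>length (J1 @ J2) = 4\<close> by simp
      ultimately have "(J1 @ J2)!2 \<in> set B" using J2B by (metis nth_mem subsetD)
      moreover have "(J1 @ J2)!2 \<in> set (J1 @ J2)" using \<open>length (J1 @ J2) = 4\<close> by (intro nth_mem) simp
      ultimately show False using no3[OF Wd c2] i2 by blast
    qed
  qed
qed

lemma allmid: assumes j0: "3 \<le> j0" "j0 \<le> m" "\<theta> (xl j0) \<noteq> []"
  shows "\<And>j. 3 \<le> j \<Longrightarrow> j \<le> m \<Longrightarrow> \<theta> (xl j) \<noteq> []"
proof -
  have up: "\<And>d. j0 + d \<le> m \<Longrightarrow> \<theta> (xl (j0 + d)) \<noteq> []"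
  proof -
    fix d show "j0 + d \<le> m \<Longrightarrow> \<theta> (xl (j0 + d)) \<noteq> []"
    proof (induction d)
      case 0 then show ?case using j0 by simp
    next
      case (Suc d)
      then have "\<theta> (xl (j0 + d)) \<noteq> []" by simp
      then have "\<theta> (xl ((j0 + d - 3) + 4)) \<noteq> []" using cascade[of "j0 + d - 3"] Suc.prems j0 by simp
      then show ?case using j0 by (simp add: add.commute)
    qed
  qed
  have down: "\<And>d. 3 \<le> j0 - d \<Longrightarrow> \<theta> (xl (j0 - d)) \<noteq> []"
  proof -
    fix d show "3 \<le> j0 - d \<Longrightarrow> \<theta> (xl (j0 - d)) \<noteq> []"
    proof (induction d)
      case 0 then show ?case using j0 by simp
    next
      case (Suc d)
      then have "\<theta> (xl (j0 - d)) \<noteq> []" by simp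
      then have "\<theta> (xl ((j0 - d - 3) + 2)) \<noteq> []" using cascade[of "j0 - d - 3"] Suc.prems j0 by simp
      moreover have "(j0 - d - 3) + 2 = j0 - Suc d" using Suc.prems by simp
      ultimately show ?case by simp
    qed
  qed
  fix j assume j: "3 \<le> j" "j \<le> m"
  show "\<theta> (xl j) \<noteq> []"
  proof (cases "j0 \<le> j")
    case True then show ?thesis using up[of "j - j0"] j by simp
  next
    case False then show ?thesis using down[of "j0 - j"] j by simp
  qed
qed

lemma main_eq: assumes ny: "\<theta> 0 \<noteq> []" shows "m = k"
proof -
  obtain c where th: "\<theta> 0 = [c]"
    using T1[of 0] cnt_lin(7)[of m] ny by (cases "\<theta> 0") auto
  obtain j0 where "3 \<le> j0" "j0 \<le> m" "\<theta> (xl j0) \<noteq> []" using claimA[OF th] by blast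
  note mid = allmid[OF this]
  have n12: "\<theta> (xl 1) \<noteq> []" "\<theta> (xl 2) \<noteq> []" using cascade[of 0] mid[of 3] m5
    by (auto simp: numeral_2_eq_2)
  have nm: "\<theta> (xl (m+1)) \<noteq> []" "\<theta> (xl (m+2)) \<noteq> []"
    using cascade[of "m-3"] mid[of m] m5 by auto
  have one: "\<And>j. 1 \<le> j \<Longrightarrow> j \<le> m+2 \<Longrightarrow> length (\<theta> (xl j)) = 1"
  proof -
    fix j assume j: "1 \<le> j" "j \<le> m+2"
    have "j = 1 \<or> j = 2 \<or> (3 \<le> j \<and> j \<le> m) \<or> j = m+1 \<or> j = m+2" using j by arith
    then have "\<theta> (xl j) \<noteq> []"
      using mid n12 nm by auto
    then show "length (\<theta> (xl j)) = 1" using len1[of j] j by (cases "\<theta> (xl j)") auto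
  qed
  define J where "J = subst_word \<theta> (Ik m)"
  define A where "A = P @ subst_word \<theta> pre0"
  define B where "B = subst_word \<theta> (suf0 m) @ Q"
  have Wd: "Wk k = A @ c # J @ c # B" using yINT(1)[OF th] by (simp add: A_def B_def J_def)
  have c2: "\<And>z. count_list (Wk k) z \<le> 2" using G1[OF k5] .
  have J6: "J = \<theta> (xl 0) @ \<theta> (xl 3) @ \<theta> (xl 1) @ \<theta> (xl 4) @ \<theta> (xl 2) @ \<theta> (xl 5) @
      subst_word \<theta> (concat (map pr [3..<Suc m]))"
    using Ik_start3[of m] m5 by (simp add: J_def)
  have "length J \<ge> 5" using J6 one[of 3] one[of 1] one[of 4] one[of 2] one[of 5] m5 by simp
  then have g: "length J = 2*k+2 \<and> hd J \<in> set A \<and> last J \<in> set B"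
    using yINT(2)[OF th] by (auto simp: A_def B_def J_def)
  have n0: "\<theta> (xl 0) \<noteq> []"
  proof
    assume z: "\<theta> (xl 0) = []"
    obtain d where d: "\<theta> (xl 3) = [d]" using one[of 3] m5 by (cases "\<theta> (xl 3)") auto
    have "hd J = d" using J6 z d by simp
    then have dA: "d \<in> set A" using g by simp
    have "count_list (Ik m) (xl 3) = 2"
      using cntU[of 3] m5 by (simp add: Wk_def pre0_def suf0_def)
    then have "2 \<le> count_list J d" using cnt_subst_ge[of d \<theta> "xl 3" "Ik m"] d by (simp add: J_def)
    then have "3 \<le> count_list (Wk k) d" using Wd dA by (simp add: in_set_cnt)
    then show False using c2[of d] by simp
  qed
  have nL: "\<theta> (xl (m+3)) \<noteq> []"
  proof
    assume z: "\<theta> (xl (m+3)) = []"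
    obtain d where d: "\<theta> (xl m) = [d]" using one[of m] m5 by (cases "\<theta> (xl m)") auto
    have "J = subst_word \<theta> (concat (map pr [0..<m])) @ [d]"
      using Ik_end1[of m] z d by (simp add: J_def)
    then have "last J = d" by simp
    then have dB: "d \<in> set B" using g by simp
    have "count_list (Ik m) (xl m) = 2"
      using cntU[of m] m5 by (simp add: Wk_def pre0_def suf0_def)
    then have "2 \<le> count_list J d" using cnt_subst_ge[of d \<theta> "xl m" "Ik m"] d by (simp add: J_def)
    then have "3 \<le> count_list (Wk k) d" using Wd dB by (simp add: in_set_cnt)
    then show False using c2[of d] by simp
  qed
  have "\<forall>z\<in>set (Ik m). length (\<theta> z) = 1"
  proof
    fix z assume "z \<in> set (Ik m)"
    then obtain i where i: "i \<le> m + 3" "z = xl i" by (auto simp: set_Ik)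
    show "length (\<theta> z) = 1"
    proof (cases "i = 0 \<or> i = m + 3")
      case True
      then have "\<theta> z \<noteq> []" using n0 nL i by auto
      then show ?thesis using len1[of i] i by (cases "\<theta> z") auto
    next
      case False then show ?thesis using one[of i] i by simp
    qed
  qed
  then have "length J = 2 * m + 2" using len_subst1 by (simp add: J_def)
  then show "m = k" using g by simp
qed

end

definition Th :: "nat set \<Rightarrow> (nat list \<times> nat list) set" where
  "Th S = {(u, v). \<forall>n\<in>S. \<forall>\<theta> p q. (p @ subst_word \<theta> u @ q = Wk (n+5)) \<longleftrightarrow> (p @ subst_word \<theta> v @ q = Wk (n+5))}"

lemma Th_eq: "equational_theory (Th S)"
  unfolding equational_theory_def
proof (intro conjI allI impI)
  show "equiv UNIV (Th S)"
  proof (rule equivI)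
    show "Th S \<subseteq> UNIV \<times> UNIV" by simp
    show "refl (Th S)" unfolding refl_on_def Th_def by auto
    show "sym (Th S)" by (rule symI) (auto simp: Th_def)
    show "trans (Th S)" by (rule transI) (auto simp: Th_def)
  qed
next
  fix u v w z assume h: "(u, v) \<in> Th S"
  show "(w @ u @ z, w @ v @ z) \<in> Th S"
    unfolding Th_def
  proof (clarify)
    fix n \<theta> p q assume n: "n \<in> S"
    have e: "\<And>x. p @ subst_word \<theta> (w @ x @ z) @ q = (p @ subst_word \<theta> w) @ subst_word \<theta> x @ (subst_word \<theta> z @ q)"
      by simp
    have "((p @ subst_word \<theta> w) @ subst_word \<theta> u @ (subst_word \<theta> z @ q) = Wk (n + 5)) =
          ((p @ subst_word \<theta> w) @ subst_word \<theta> v @ (subst_word \<theta> z @ q) = Wk (n + 5))"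
      using h n unfolding Th_def by blast
    then show "(p @ subst_word \<theta> (w @ u @ z) @ q = Wk (n + 5)) = (p @ subst_word \<theta> (w @ v @ z) @ q = Wk (n + 5))"
      by (simp only: e)
  qed
next
  fix u v \<sigma> assume h: "(u, v) \<in> Th S"
  show "(subst_word \<sigma> u, subst_word \<sigma> v) \<in> Th S"
    using h unfolding Th_def by (simp add: subst_subst)
qed

lemma IdM_Th: "Id_M \<subseteq> Th S"
proof
  fix x assume x: "x \<in> Id_M"
  obtain u v where uv: "x = (u, v)" by (cases x)
  have a: "\<And>n \<theta> p q u v. (u, v) \<in> Id_M \<Longrightarrow> p @ subst_word \<theta> u @ q = Wk (n+5) \<Longrightarrow> p @ subst_word \<theta> v @ q = Wk (n+5)"
  proof -
    fix n \<theta> p q u v assume h: "(u, v) \<in> Id_M" "p @ subst_word \<theta> u @ q = Wk (n+5)"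
    have "(Wk (n+5), p @ subst_word \<theta> v @ q) \<in> Id_M" using IdM_ctx[OF h(1)] h(2) by metis
    then show "p @ subst_word \<theta> v @ q = Wk (n+5)" using Wk_iso[of "n+5"] by simp
  qed
  show "x \<in> Th S" unfolding Th_def uv using a[of u v] a[of v u] x uv IdM_sym by blast
qed

lemma sep_in: "m \<notin> S \<Longrightarrow> (Wk (m+5), Wk (m+5) @ [0]) \<in> Th S"
  unfolding Th_def
proof (clarify)
  fix n \<theta> p q assume mS: "m \<notin> S" and n: "n \<in> S"
  then have mn: "m + 5 \<noteq> n + 5" by auto
  have z1: "p @ subst_word \<theta> (Wk (m+5)) @ q = Wk (n+5) \<Longrightarrow> \<theta> 0 = []"
    using main_eq[of "m+5" "n+5" p \<theta> q] mn by auto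
  have z2: "\<theta> 0 = []" if h: "p @ subst_word \<theta> (Wk (m+5) @ [0]) @ q = Wk (n+5)"
  proof (rule ccontr)
    assume "\<theta> 0 \<noteq> []"
    then obtain d r where d: "\<theta> 0 = d # r" by (cases "\<theta> 0") auto
    have "count_list (Wk (m+5)) 0 \<le> count_list (subst_word \<theta> (Wk (m+5))) d"
      using cnt_subst_ge[of d \<theta> 0] d by simp
    then have "2 \<le> count_list (subst_word \<theta> (Wk (m+5))) d" using cnt_lin(7) by simp
    moreover have "count_list (Wk (n+5)) d = count_list p d + count_list (subst_word \<theta> (Wk (m+5))) d
        + count_list (\<theta> 0) d + count_list q d"
      using h by (metis count_list_append subst_append subst_Cons subst_Nil append_Nil2 add.assoc)
    ultimately have "3 \<le> count_list (Wk (n+5)) d" using d by simp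
    then show False using G1[of "n+5" d] by simp
  qed
  show "(p @ subst_word \<theta> (Wk (m + 5)) @ q = Wk (n + 5)) =
        (p @ subst_word \<theta> (Wk (m + 5) @ [0]) @ q = Wk (n + 5))"
    using z1 z2 by auto
qed

lemma sep_out: "m \<in> S \<Longrightarrow> (Wk (m+5), Wk (m+5) @ [0]) \<notin> Th S"
proof
  assume m: "m \<in> S" and h: "(Wk (m+5), Wk (m+5) @ [0]) \<in> Th S"
  then have "([] @ subst_word (\<lambda>x. [x]) (Wk (m+5)) @ [] = Wk (m+5)) =
             ([] @ subst_word (\<lambda>x. [x]) (Wk (m+5) @ [0]) @ [] = Wk (m+5))"
    unfolding Th_def by blast
  then show False by (simp add: subst_id)
qed

lemma Th_inj: "inj Th"
proof (rule injI)
  fix S S' assume eq: "Th S = Th S'"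
  show "S = S'"
  proof (rule ccontr)
    assume "S \<noteq> S'"
    then obtain m where "(m \<in> S) \<noteq> (m \<in> S')" by (meson set_eqI)
    then have "(m \<in> S \<and> m \<notin> S') \<or> (m \<in> S' \<and> m \<notin> S)" by simp
    then show False
    proof
      assume "m \<in> S \<and> m \<notin> S'"
      then show False using sep_in[of m S'] sep_out[of m S] eq by simp
    next
      assume "m \<in> S' \<and> m \<notin> S"
      then show False using sep_in[of m S] sep_out[of m S'] eq by simp
    qed
  qed
qed

lemma range_sub: "range Th \<subseteq> subvariety_theories"
  unfolding subvariety_theories_def using Th_eq IdM_Th by blast

lemma nat_sets_uncountable: "countable (UNIV :: nat set set) \<Longrightarrow> False"
proof -
  assume cu: "countable (UNIV :: nat set set)"
  have ne: "(UNIV :: nat set set) \<noteq> {}" by simp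
  from cu have "\<not> ((UNIV :: nat set set) \<noteq> {} \<and> \<not> (\<exists>f::nat \<Rightarrow> nat set. range f = UNIV))"
    by (subst uncountable_def[symmetric]) simp
  then have "\<exists>f::nat \<Rightarrow> nat set. range f = UNIV" using ne by blast
  then obtain f :: "nat \<Rightarrow> nat set" where f: "range f = UNIV" by blast
  have "{i. i \<notin> f i} \<in> range f" using f by simp
  then obtain n where fn: "{i. i \<notin> f i} = f n" by blast
  have "n \<in> f n \<longleftrightarrow> n \<notin> f n" by (subst (2) fn[symmetric]) simp
  then show False by simp
qed

theorem corollary1:
  shows "\<not> countable subvariety_theories"
proof
  assume c: "countable subvariety_theories"
  have "countable (range Th)" using range_sub c by (rule countable_subset)
  then have "countable (UNIV :: nat set set)" using Th_inj by (rule countable_image_inj_on)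
  then show False by (rule nat_sets_uncountable)
qed

end
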